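(* For the Pólya urn process on $H$ and any vertex $i\in[m]$, $\mathbb P\big[\lim_{n\to\infty}B_i(n)=\infty\big]=1$.
   Context: Let $H=(V,E)$ be a finite hypergraph with vertex set $V=[m]=\{1,\dots,m\}$ and a set $E$ of $N\ge 1$ hyperedges (nonempty subsets of $[m]$), such that every vertex belongs to at least one hyperedge. Pólya urn on $H$: initially vertex $i$ holds $B_i(0)\ge 1$ balls; $N_0=\sum_{i=1}^m B_i(0)$. At each step $n\ge 1$, for each hyperedge $I\in E$ (independently across hyperedges, conditionally on the past) one ball is added to a vertex $i\in I$ chosen with probability $B_i(n-1)/\sum_{j\in I}B_j(n-1)$, where $B_i(n)$ denotes the number of balls at vertex $i$ after step $n$. *)

theory Defs
  imports "HOL-Probability.Probability"
begin

definition hypergraph :: "nat \<Rightarrow> nat set set \<Rightarrow> bool" where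
  "hypergraph m E \<longleftrightarrow> finite E \<and> E \<noteq> {} \<and> (\<forall>I\<in>E. I \<noteq> {} \<and> I \<subseteq> {1..m})
     \<and> (\<forall>i\<in>{1..m}. \<exists>I\<in>E. i \<in> I)"

text \<open>X n I \<omega> is the vertex of hyperedge I receiving a ball at step n (n >= 1).
  urn_balls B0 E X n \<omega> i is B_i(n), the number of balls at vertex i after step n.\<close>
primrec urn_balls :: "(nat \<Rightarrow> nat) \<Rightarrow> nat set set \<Rightarrow> (nat \<Rightarrow> nat set \<Rightarrow> 'a \<Rightarrow> nat)
    \<Rightarrow> nat \<Rightarrow> 'a \<Rightarrow> nat \<Rightarrow> nat" where
  "urn_balls B0 E X 0 \<omega> = B0"
| "urn_balls B0 E X (Suc n) \<omega> =
     (\<lambda>i. urn_balls B0 E X n \<omega> i + card {I\<in>E. X (Suc n) I \<omega> = i})"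

text \<open>The Polya urn on H: conditionally on the whole history of the first n steps,
  the choices at step n+1 for the different hyperedges are independent, and hyperedge I
  sends its ball to vertex j \<in> I with probability B_j(n) / (sum over I of B(n)).\<close>
definition polya_urn_process ::
    "'a measure \<Rightarrow> nat \<Rightarrow> nat set set \<Rightarrow> (nat \<Rightarrow> nat) \<Rightarrow> (nat \<Rightarrow> nat set \<Rightarrow> 'a \<Rightarrow> nat) \<Rightarrow> bool" where
  "polya_urn_process M m E B0 X \<longleftrightarrow>
     prob_space M \<and> hypergraph m E \<and> (\<forall>i\<in>{1..m}. B0 i \<ge> 1) \<and>
     (\<forall>n I. X n I \<in> measurable M (count_space UNIV)) \<and>
     (\<forall>(n::nat) (h::nat \<Rightarrow> nat set \<Rightarrow> nat) (c::nat set \<Rightarrow> nat). (\<forall>I\<in>E. c I \<in> I) \<longrightarrow>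
        measure M {\<omega>\<in>space M. (\<forall>k\<in>{1..n}. \<forall>I\<in>E. X k I \<omega> = h k I)
                              \<and> (\<forall>I\<in>E. X (Suc n) I \<omega> = c I)}
        = (\<integral>\<omega>. indicator {\<omega>\<in>space M. \<forall>k\<in>{1..n}. \<forall>I\<in>E. X k I \<omega> = h k I} \<omega>
               * (\<Prod>I\<in>E. real (urn_balls B0 E X n \<omega> (c I))
                             / (\<Sum>j\<in>I. real (urn_balls B0 E X n \<omega> j))) \<partial>M))"

end

theory Submission imports Defs begin

definition hist :: "(nat \<Rightarrow> nat set \<Rightarrow> 'a \<Rightarrow> nat) \<Rightarrow> nat set set \<Rightarrow> nat \<Rightarrow> 'a \<Rightarrow> (nat \<times> nat set \<Rightarrow> nat)" where
  "hist X E n \<omega> = restrict (\<lambda>p. X (fst p) (snd p) \<omega>) ({1..n}\<times>E)"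

context
  fixes M :: "'a measure" and m :: nat and E :: "nat set set" and B0 :: "nat \<Rightarrow> nat"
    and X :: "nat \<Rightarrow> nat set \<Rightarrow> 'a \<Rightarrow> nat"
  assumes PU: "polya_urn_process M m E B0 X"
begin

lemma ps: "prob_space M" using PU unfolding polya_urn_process_def by auto
lemma hg: "hypergraph m E" using PU unfolding polya_urn_process_def by auto
lemma finE: "finite E" using hg unfolding hypergraph_def by auto
lemma Esub: "I \<in> E \<Longrightarrow> I \<subseteq> {1..m}" using hg unfolding hypergraph_def by auto
lemma finI: "I \<in> E \<Longrightarrow> finite I" using Esub finite_subset by blast
lemma B0pos: "j \<in> {1..m} \<Longrightarrow> B0 j \<ge> 1" using PU unfolding polya_urn_process_def by auto
lemma Xmeas[measurable]: "X n I \<in> measurable M (count_space UNIV)" using PU unfolding polya_urn_process_def by auto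

lemma Xset[measurable]: "{\<omega> \<in> space M. X n I \<omega> = v} \<in> sets M"
proof -
  have "{\<omega> \<in> space M. X n I \<omega> = v} = X n I -` {v} \<inter> space M" by auto
  thus ?thesis using measurable_sets[OF Xmeas, of "{v}"] by auto
qed

lemma card_eq_sum: "finite A \<Longrightarrow> card {x\<in>A. P x} = (\<Sum>x\<in>A. if P x then 1 else 0)"
  by (simp add: sum.If_cases Int_def)

lemma urn_meas: "(\<lambda>\<omega>. urn_balls B0 E X n \<omega> j) \<in> measurable M (count_space UNIV)"
proof (induction n)
  case 0 thus ?case by simp
next
  case (Suc n)
  have e: "(\<lambda>\<omega>. urn_balls B0 E X (Suc n) \<omega> j) = (\<lambda>\<omega>. urn_balls B0 E X n \<omega> j + (\<Sum>I\<in>E. if X (Suc n) I \<omega> = j then 1 else 0))"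
    using card_eq_sum[OF finE] by simp
  have m2: "(\<lambda>\<omega>. (\<Sum>I\<in>E. if X (Suc n) I \<omega> = j then 1 else (0::nat))) \<in> measurable M (count_space UNIV)"
    by measurable
  show ?case unfolding e using Suc m2 by measurable
qed


lemma urn_ge: "urn_balls B0 E X n \<omega> j \<ge> B0 j"
  by (induction n) (auto intro: le_trans)

lemma urn_mono: "n \<le> k \<Longrightarrow> urn_balls B0 E X n \<omega> j \<le> urn_balls B0 E X k \<omega> j"
proof (induction k)
  case 0 thus ?case by simp
next
  case (Suc k) thus ?case by (cases "n = Suc k") (auto intro: le_trans)
qed

lemma sum_card_le: "finite I \<Longrightarrow> (\<Sum>j\<in>I. card {I'\<in>E. f I' = j}) \<le> card E"
proof -
  assume fI: "finite I"
  have "(\<Sum>j\<in>I. card {I'\<in>E. f I' = j}) = (\<Sum>j\<in>I. \<Sum>I'\<in>E. if f I' = j then 1 else 0)"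
    using card_eq_sum[OF finE] by simp
  also have "\<dots> = (\<Sum>I'\<in>E. \<Sum>j\<in>I. if f I' = j then 1 else 0)" by (rule sum.swap)
  also have "\<dots> \<le> (\<Sum>I'\<in>E. 1)"
  proof (rule sum_mono)
    fix I' assume "I' \<in> E"
    have "(\<Sum>j\<in>I. if f I' = j then 1 else (0::nat)) = (if f I' \<in> I then 1 else 0)"
      using fI by (simp add: sum.delta')
    thus "(\<Sum>j\<in>I. if f I' = j then 1 else (0::nat)) \<le> 1" by simp
  qed
  finally show ?thesis by simp
qed

lemma sum_urn_le: "I \<in> E \<Longrightarrow> (\<Sum>j\<in>I. urn_balls B0 E X n \<omega> j) \<le> (\<Sum>j\<in>{1..m}. B0 j) + n * card E"
proof (induction n)
  case 0
  thus ?case using Esub[OF 0] by (simp add: sum_mono2)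
next
  case (Suc n)
  have "(\<Sum>j\<in>I. urn_balls B0 E X (Suc n) \<omega> j) = (\<Sum>j\<in>I. urn_balls B0 E X n \<omega> j) + (\<Sum>j\<in>I. card {I'\<in>E. X (Suc n) I' \<omega> = j})"
    by (simp add: sum.distrib)
  also have "\<dots> \<le> (\<Sum>j\<in>{1..m}. B0 j) + n * card E + card E"
    using Suc sum_card_le[OF finI[OF Suc.prems]] by (intro add_mono) auto
  finally show ?case by simp
qed


definition "DD n = real ((\<Sum>j\<in>{1..m}. B0 j) + n * card E)"

lemma ratio_ge: assumes "I \<in> E" "i \<in> I"
  shows "real (urn_balls B0 E X n \<omega> i) / (\<Sum>j\<in>I. real (urn_balls B0 E X n \<omega> j)) \<ge> 1 / DD n"
proof -
  have im: "i \<in> {1..m}" using Esub[OF assms(1)] assms(2) by blast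
  have b1: "real (urn_balls B0 E X n \<omega> i) \<ge> 1" using urn_ge[of i n \<omega>] B0pos[OF im] by linarith
  have "real (urn_balls B0 E X n \<omega> i) \<le> (\<Sum>j\<in>I. real (urn_balls B0 E X n \<omega> j))"
    using assms finI by (intro member_le_sum) auto
  hence sp: "(\<Sum>j\<in>I. real (urn_balls B0 E X n \<omega> j)) \<ge> 1" using b1 by linarith
  have "real (\<Sum>j\<in>I. urn_balls B0 E X n \<omega> j) \<le> DD n"
    unfolding DD_def by (rule of_nat_mono[OF sum_urn_le[OF assms(1)]])
  hence "(\<Sum>j\<in>I. real (urn_balls B0 E X n \<omega> j)) \<le> DD n" by simp
  hence "1 / DD n \<le> 1 / (\<Sum>j\<in>I. real (urn_balls B0 E X n \<omega> j))" using sp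
    by (intro divide_left_mono) auto
  also have "\<dots> \<le> real (urn_balls B0 E X n \<omega> i) / (\<Sum>j\<in>I. real (urn_balls B0 E X n \<omega> j))"
    using b1 sp by (intro divide_right_mono) auto
  finally show ?thesis .
qed

lemma DD_pos: "DD n \<ge> 1"
proof -
  obtain I where I: "I \<in> E" using hg unfolding hypergraph_def by auto
  then obtain i where "i \<in> I" using hg unfolding hypergraph_def by blast
  hence im: "i \<in> {1..m}" using Esub[OF I] by blast
  have "B0 i \<le> (\<Sum>j\<in>{1..m}. B0 j)" using im by (intro member_le_sum) auto
  hence h: "1 \<le> (\<Sum>j\<in>{1..m}. B0 j) + n * card E" using B0pos[OF im] by linarith
  show ?thesis unfolding DD_def using of_nat_mono[OF h] by simp
qed

lemma Ene: "I \<in> E \<Longrightarrow> I \<noteq> {}" using hg unfolding hypergraph_def by auto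

lemma denom_pos: assumes "I \<in> E" shows "(\<Sum>j\<in>I. real (urn_balls B0 E X n \<omega> j)) > 0"
proof -
  obtain i where i: "i \<in> I" using Ene[OF assms] by blast
  have im: "i \<in> {1..m}" using Esub[OF assms] i by blast
  have b1: "real (urn_balls B0 E X n \<omega> i) \<ge> 1" using urn_ge[of i n \<omega>] B0pos[OF im] by linarith
  have "real (urn_balls B0 E X n \<omega> i) \<le> (\<Sum>j\<in>I. real (urn_balls B0 E X n \<omega> j))"
    using assms finI i by (intro member_le_sum) auto
  thus ?thesis using b1 by linarith
qed

lemma hist_eq: "g \<in> PiE ({1..n}\<times>E) (\<lambda>_. UNIV) \<Longrightarrow>
  {\<omega>\<in>space M. hist X E n \<omega> = g} = {\<omega>\<in>space M. \<forall>k\<in>{1..n}. \<forall>I\<in>E. X k I \<omega> = g (k,I)}"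
  unfolding hist_def by (auto simp: fun_eq_iff restrict_def PiE_def extensional_def)

lemma histA_meas[measurable]: "{\<omega>\<in>space M. \<forall>k\<in>{1..n}. \<forall>I\<in>E. X k I \<omega> = h k I} \<in> sets M"
  using finE by measurable

lemma hist_meas[measurable]: "g \<in> PiE ({1..n}\<times>E) (\<lambda>_. UNIV) \<Longrightarrow> {\<omega>\<in>space M. hist X E n \<omega> = g} \<in> sets M"
  using hist_eq[of g n] histA_meas[of n "\<lambda>k I. g (k,I)"] by simp

lemma Hyp: "(\<forall>I\<in>E. c I \<in> I) \<Longrightarrow>
        measure M {\<omega>\<in>space M. (\<forall>k\<in>{1..n}. \<forall>I\<in>E. X k I \<omega> = h k I)
                              \<and> (\<forall>I\<in>E. X (Suc n) I \<omega> = c I)}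
        = (\<integral>\<omega>. indicator {\<omega>\<in>space M. \<forall>k\<in>{1..n}. \<forall>I\<in>E. X k I \<omega> = h k I} \<omega>
               * (\<Prod>I\<in>E. real (urn_balls B0 E X n \<omega> (c I))
                             / (\<Sum>j\<in>I. real (urn_balls B0 E X n \<omega> j))) \<partial>M)"
  using PU unfolding polya_urn_process_def by blast

lemma urn_real_meas[measurable]: "(\<lambda>\<omega>. real (urn_balls B0 E X n \<omega> j)) \<in> borel_measurable M"
  using urn_meas[of n j] by measurable

lemma per_h:
  assumes g: "g \<in> PiE ({1..n}\<times>E) (\<lambda>_. UNIV)" and I: "I \<in> E" "i \<in> I"
  shows "measure M {\<omega>\<in>space M. hist X E n \<omega> = g} / DD n
     \<le> measure M {\<omega>\<in>space M. hist X E n \<omega> = g \<and> X (Suc n) I \<omega> = i}"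
proof -
  interpret prob_space M by (rule ps)
  define h where "h = (\<lambda>k I. g (k,I))"
  define A where "A = {\<omega>\<in>space M. \<forall>k\<in>{1..n}. \<forall>I\<in>E. X k I \<omega> = h k I}"
  have Aeq: "{\<omega>\<in>space M. hist X E n \<omega> = g} = A" using hist_eq[OF g] unfolding A_def h_def by simp
  have Am[measurable]: "A \<in> sets M" unfolding A_def by (rule histA_meas)
  define T where "T = (\<lambda>I'. if I' = I then {i} else I')"
  define C where "C = PiE E T"
  have finC: "finite C" unfolding C_def T_def using finE finI by (intro finite_PiE) auto
  have cin: "\<forall>I'\<in>E. c I' \<in> I'" if "c \<in> C" for c
    using that I by (auto simp: C_def T_def PiE_def Pi_def split: if_splits)
  define ev where "ev c = {\<omega>\<in>space M. (\<forall>k\<in>{1..n}. \<forall>I\<in>E. X k I \<omega> = h k I) \<and> (\<forall>I'\<in>E. X (Suc n) I' \<omega> = c I')}" for c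
  define r where "r \<omega> I' j = real (urn_balls B0 E X n \<omega> j) / (\<Sum>j\<in>I'. real (urn_balls B0 E X n \<omega> j))" for \<omega> I' j
  define f where "f \<omega> c = (\<Prod>I'\<in>E. r \<omega> I' (c I'))" for \<omega> c
  have evm: "measure M (ev c) = (\<integral>\<omega>. indicator A \<omega> * f \<omega> c \<partial>M)" if "c \<in> C" for c
    unfolding ev_def A_def f_def r_def by (rule Hyp[OF cin[OF that]])
  have evs: "ev c \<in> sets M" for c
  proof -
    have "ev c = A \<inter> (\<Inter>I'\<in>E. {\<omega>\<in>space M. X (Suc n) I' \<omega> = c I'}) \<inter> space M"
      unfolding ev_def A_def by auto
    thus ?thesis using finE Ene by auto
  qed
  have disj: "disjoint_family_on ev C"
  proof (auto simp: disjoint_family_on_def)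
    fix c c' \<omega> assume c: "c \<in> C" "c' \<in> C" "c \<noteq> c'" and w: "\<omega> \<in> ev c" "\<omega> \<in> ev c'"
    obtain I' where "I' \<in> E" "c I' \<noteq> c' I'" using c unfolding C_def
      by (metis PiE_ext)
    thus False using w unfolding ev_def by auto
  qed
  have sub: "(\<Union>c\<in>C. ev c) \<subseteq> {\<omega>\<in>space M. hist X E n \<omega> = g \<and> X (Suc n) I \<omega> = i}"
  proof
    fix \<omega> assume "\<omega> \<in> (\<Union>c\<in>C. ev c)"
    then obtain c where c: "c \<in> C" "\<omega> \<in> ev c" by blast
    have "c I = i" using c(1) I(1) unfolding C_def T_def by (auto simp: PiE_def Pi_def)
    thus "\<omega> \<in> {\<omega>\<in>space M. hist X E n \<omega> = g \<and> X (Suc n) I \<omega> = i}"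
      using c(2) Aeq I(1) unfolding ev_def A_def by auto
  qed
  have r01: "0 \<le> r \<omega> I' j \<and> r \<omega> I' j \<le> 1" if "I' \<in> E" "j \<in> I'" for \<omega> I' j
  proof -
    have "real (urn_balls B0 E X n \<omega> j) \<le> (\<Sum>j\<in>I'. real (urn_balls B0 E X n \<omega> j))"
      using that finI by (intro member_le_sum) auto
    thus ?thesis unfolding r_def using denom_pos[OF that(1), of n \<omega>] by auto
  qed
  have f01: "0 \<le> f \<omega> c \<and> f \<omega> c \<le> 1" if "c \<in> C" for \<omega> c
    unfolding f_def using r01 cin[OF that] by (auto intro!: prod_nonneg prod_le_1)
  have integ: "integrable M (\<lambda>\<omega>. indicator A \<omega> * f \<omega> c)" if "c \<in> C" for c
  proof (rule integrable_const_bound[where B=1])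
    show "AE x in M. norm (indicator A x * f x c) \<le> 1" using f01[OF that]
      by (auto simp: indicator_def)
    show "(\<lambda>\<omega>. indicator A \<omega> * f \<omega> c) \<in> borel_measurable M"
      unfolding f_def r_def using finE by measurable
  qed
  have sumf: "(\<Sum>c\<in>C. f \<omega> c) = r \<omega> I i" for \<omega>
  proof -
    have "(\<Sum>c\<in>C. f \<omega> c) = (\<Prod>I'\<in>E. \<Sum>j\<in>T I'. r \<omega> I' j)"
      unfolding C_def f_def using finE finI by (subst prod_sum_PiE) (auto simp: T_def)
    also have "\<dots> = (\<Prod>I'\<in>E. if I' = I then r \<omega> I i else 1)"
    proof (rule prod.cong)
      fix I' assume I': "I' \<in> E"
      have "(\<Sum>j\<in>I'. r \<omega> I' j) = 1"
        unfolding r_def using denom_pos[OF I', of n \<omega>] by (simp add: sum_divide_distrib[symmetric])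
      thus "(\<Sum>j\<in>T I'. r \<omega> I' j) = (if I' = I then r \<omega> I i else 1)" by (simp add: T_def)
    qed simp
    also have "\<dots> = r \<omega> I i" using finE I by (simp add: prod.delta)
    finally show ?thesis .
  qed
  have "measure M {\<omega>\<in>space M. hist X E n \<omega> = g} / DD n = (\<integral>\<omega>. indicator A \<omega> * (1 / DD n) \<partial>M)"
    using Aeq Am by simp
  also have "\<dots> \<le> (\<integral>\<omega>. (\<Sum>c\<in>C. indicator A \<omega> * f \<omega> c) \<partial>M)"
  proof (rule integral_mono_AE')
    show "integrable M (\<lambda>\<omega>. \<Sum>c\<in>C. indicator A \<omega> * f \<omega> c)" using integ by auto
    show "AE x in M. indicator A x * (1 / DD n) \<le> (\<Sum>c\<in>C. indicator A x * f x c)"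
      using ratio_ge[OF I, of n] sumf by (auto simp: indicator_def r_def sum_distrib_left[symmetric])
    show "AE x in M. 0 \<le> (\<Sum>c\<in>C. indicator A x * f x c)"
      using f01 by (auto intro!: sum_nonneg)
  qed
  also have "\<dots> = (\<Sum>c\<in>C. measure M (ev c))"
    using integ evm by (simp add: integral_sum)
  also have "\<dots> = measure M (\<Union>c\<in>C. ev c)"
    using finC evs disj by (intro finite_measure_finite_Union[symmetric]) auto
  also have "\<dots> \<le> measure M {\<omega>\<in>space M. hist X E n \<omega> = g \<and> X (Suc n) I \<omega> = i}"
  proof (rule finite_measure_mono[OF sub])
    have "{\<omega>\<in>space M. hist X E n \<omega> = g \<and> X (Suc n) I \<omega> = i} = {\<omega>\<in>space M. hist X E n \<omega> = g} \<inter> {\<omega>\<in>space M. X (Suc n) I \<omega> = i}" by auto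
    thus "{\<omega>\<in>space M. hist X E n \<omega> = g \<and> X (Suc n) I \<omega> = i} \<in> sets M" using g by simp
  qed
  finally show ?thesis .
qed

lemma KL:
  assumes I: "I \<in> E" "i \<in> I"
  shows "measure M {\<omega>\<in>space M. P (hist X E n \<omega>)} / DD n
     \<le> measure M {\<omega>\<in>space M. P (hist X E n \<omega>) \<and> X (Suc n) I \<omega> = i}"
proof -
  interpret prob_space M by (rule ps)
  define G where "G = {g \<in> PiE ({1..n}\<times>E) (\<lambda>_. UNIV::nat set). P g}"
  have cG: "countable G" unfolding G_def
    by (rule countable_subset[OF _ countable_PiE[of "{1..n}\<times>E" "\<lambda>_. UNIV::nat set"]]) (auto simp: finE)
  define A where "A g = {\<omega>\<in>space M. hist X E n \<omega> = g}" for g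
  define B where "B g = {\<omega>\<in>space M. hist X E n \<omega> = g \<and> X (Suc n) I \<omega> = i}" for g
  have hin: "hist X E n \<omega> \<in> PiE ({1..n}\<times>E) (\<lambda>_. UNIV::nat set)" for \<omega>
    unfolding hist_def by auto
  have U1: "{\<omega>\<in>space M. P (hist X E n \<omega>)} = (\<Union>g\<in>G. A g)"
  proof (rule set_eqI)
    fix \<omega> show "\<omega> \<in> {\<omega>\<in>space M. P (hist X E n \<omega>)} \<longleftrightarrow> \<omega> \<in> (\<Union>g\<in>G. A g)"
      unfolding G_def A_def using hin[of \<omega>] by auto
  qed
  have U2: "{\<omega>\<in>space M. P (hist X E n \<omega>) \<and> X (Suc n) I \<omega> = i} = (\<Union>g\<in>G. B g)"
  proof (rule set_eqI)
    fix \<omega> show "\<omega> \<in> {\<omega>\<in>space M. P (hist X E n \<omega>) \<and> X (Suc n) I \<omega> = i} \<longleftrightarrow> \<omega> \<in> (\<Union>g\<in>G. B g)"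
      unfolding G_def B_def using hin[of \<omega>] by auto
  qed
  have As: "A g \<in> sets M" if "g \<in> G" for g using that unfolding A_def G_def by simp
  have Bs: "B g \<in> sets M" if "g \<in> G" for g
  proof -
    have "B g = A g \<inter> {\<omega>\<in>space M. X (Suc n) I \<omega> = i}" unfolding A_def B_def by auto
    thus ?thesis using As[OF that] by simp
  qed
  have dA: "disjoint_family_on A G" unfolding A_def disjoint_family_on_def by auto
  have dB: "disjoint_family_on B G" unfolding B_def disjoint_family_on_def by auto
  have "ennreal (measure M {\<omega>\<in>space M. P (hist X E n \<omega>)}) * ennreal (1 / DD n)
      = (\<integral>\<^sup>+g. emeasure M (A g) \<partial>count_space G) * ennreal (1 / DD n)"
    unfolding U1 using emeasure_UN_countable[OF As cG dA] by (simp add: emeasure_eq_measure)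
  also have "\<dots> = (\<integral>\<^sup>+g. emeasure M (A g) * ennreal (1 / DD n) \<partial>count_space G)"
    by (rule nn_integral_multc[symmetric]) simp
  also have "\<dots> \<le> (\<integral>\<^sup>+g. emeasure M (B g) \<partial>count_space G)"
  proof (rule nn_integral_mono)
    fix g assume "g \<in> space (count_space G)"
    hence g: "g \<in> G" by simp
    have "measure M (A g) / DD n \<le> measure M (B g)"
      unfolding A_def B_def using per_h[OF _ I, of g n] g unfolding G_def by simp
    hence "measure M (A g) * (1 / DD n) \<le> measure M (B g)" by simp
    hence "ennreal (measure M (A g) * (1 / DD n)) \<le> ennreal (measure M (B g))" by (rule ennreal_leI)
    moreover have "ennreal (measure M (A g) * (1 / DD n)) = ennreal (measure M (A g)) * ennreal (1 / DD n)"
      using DD_pos[of n] by (intro ennreal_mult) auto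
    ultimately have "ennreal (measure M (A g)) * ennreal (1 / DD n) \<le> ennreal (measure M (B g))" by metis
    thus "emeasure M (A g) * ennreal (1 / DD n) \<le> emeasure M (B g)"
      by (simp add: emeasure_eq_measure)
  qed
  also have "\<dots> = ennreal (measure M {\<omega>\<in>space M. P (hist X E n \<omega>) \<and> X (Suc n) I \<omega> = i})"
    unfolding U2 using emeasure_UN_countable[OF Bs cG dB] by (simp add: emeasure_eq_measure)
  finally have le: "ennreal (measure M {\<omega>\<in>space M. P (hist X E n \<omega>)}) * ennreal (1 / DD n)
     \<le> ennreal (measure M {\<omega>\<in>space M. P (hist X E n \<omega>) \<and> X (Suc n) I \<omega> = i})" .
  have "ennreal (measure M {\<omega>\<in>space M. P (hist X E n \<omega>)} * (1 / DD n)) = ennreal (measure M {\<omega>\<in>space M. P (hist X E n \<omega>)}) * ennreal (1 / DD n)"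
    using DD_pos[of n] by (intro ennreal_mult) auto
  with le have "ennreal (measure M {\<omega>\<in>space M. P (hist X E n \<omega>)} * (1 / DD n))
     \<le> ennreal (measure M {\<omega>\<in>space M. P (hist X E n \<omega>) \<and> X (Suc n) I \<omega> = i})" by simp
  hence "measure M {\<omega>\<in>space M. P (hist X E n \<omega>)} * (1 / DD n)
     \<le> measure M {\<omega>\<in>space M. P (hist X E n \<omega>) \<and> X (Suc n) I \<omega> = i}"
    by (subst (asm) ennreal_le_iff) auto
  thus ?thesis by simp
qed

lemma F_meas[measurable]: "{\<omega>\<in>space M. \<forall>k\<in>{n0<..n0+L}. X k I \<omega> \<noteq> i} \<in> sets M"
  by measurable

lemma F_bound:
  assumes I: "I \<in> E" "i \<in> I"
  shows "measure M {\<omega>\<in>space M. \<forall>k\<in>{n0<..n0+L}. X k I \<omega> \<noteq> i} \<le> exp (- (\<Sum>k<L. 1 / DD (n0+k)))"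
proof (induction L)
  case 0
  interpret prob_space M by (rule ps)
  show ?case by simp
next
  case (Suc L)
  interpret prob_space M by (rule ps)
  define n where "n = n0 + L"
  define P where "P g = (\<forall>k\<in>{n0<..n0+L}. g (k,I) \<noteq> i)" for g :: "nat \<times> nat set \<Rightarrow> nat"
  define FL where "FL = {\<omega>\<in>space M. \<forall>k\<in>{n0<..n0+L}. X k I \<omega> \<noteq> i}"
  define Q where "Q = {\<omega>\<in>space M. P (hist X E n \<omega>) \<and> X (Suc n) I \<omega> = i}"
  have FLeq: "FL = {\<omega>\<in>space M. P (hist X E n \<omega>)}"
    unfolding FL_def P_def n_def hist_def using I by auto
  have Qeq: "Q = FL \<inter> {\<omega>\<in>space M. X (Suc n) I \<omega> = i}" unfolding Q_def FLeq by auto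
  have FLm: "FL \<in> sets M" unfolding FL_def by simp
  have Qm: "Q \<in> sets M" using FLm Qeq by simp
  have FS: "{\<omega>\<in>space M. \<forall>k\<in>{n0<..n0+Suc L}. X k I \<omega> \<noteq> i} = FL - Q"
  proof -
    have "{n0<..n0+Suc L} = insert (Suc n) {n0<..n0+L}" unfolding n_def by auto
    thus ?thesis unfolding Qeq FL_def by auto
  qed
  have QF: "Q \<subseteq> FL" unfolding Q_def FLeq by auto
  have kl: "measure M FL / DD n \<le> measure M Q" unfolding FLeq Q_def by (rule KL[OF I])
  define s where "s = (\<Sum>k<L. 1 / DD (n0+k))"
  have IH: "measure M FL \<le> exp (- s)" using Suc.IH unfolding FL_def s_def .
  have D1: "DD n \<ge> 1" by (rule DD_pos)
  have "measure M (FL - Q) = measure M FL - measure M Q" using FLm Qm QF by (rule finite_measure_Diff)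
  also have "\<dots> \<le> measure M FL * (1 - 1 / DD n)" using kl by (simp add: algebra_simps)
  also have "\<dots> \<le> exp (- s) * (1 - 1 / DD n)" using IH D1 by (intro mult_right_mono) auto
  also have "\<dots> \<le> exp (- s) * exp (- (1 / DD n))"
    using exp_ge_add_one_self[of "- (1 / DD n)"] by (intro mult_left_mono) auto
  also have "\<dots> = exp (- (\<Sum>k<Suc L. 1 / DD (n0+k)))" unfolding s_def n_def by (simp add: exp_add[symmetric])
  finally show ?case unfolding FS .
qed

lemma harm_sum: "harm L = (\<Sum>k<L. 1 / real (Suc k))"
  by (induction L) (auto simp: harm_Suc harm_def field_simps)

lemma DD_le: "DD (n0 + k) \<le> DD (Suc n0) * real (Suc k)"
proof -
  define S where "S = (\<Sum>j\<in>{1..m}. B0 j)"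
  have a: "(n0+k) * card E \<le> (Suc n0) * Suc k * card E" by (intro mult_right_mono) (auto simp: algebra_simps)
  have b: "S \<le> S * Suc k" by simp
  have "S + (n0+k) * card E \<le> (S + Suc n0 * card E) * Suc k"
    using a b by (simp add: algebra_simps)
  hence "real (S + (n0+k) * card E) \<le> real ((S + Suc n0 * card E) * Suc k)" by (rule of_nat_mono)
  thus ?thesis unfolding DD_def S_def by (simp only: of_nat_mult)
qed

lemma urn_val_meas: "{\<omega>\<in>space M. urn_balls B0 E X k \<omega> i = v} \<in> sets M"
proof -
  have "{\<omega>\<in>space M. urn_balls B0 E X k \<omega> i = v} = (\<lambda>\<omega>. urn_balls B0 E X k \<omega> i) -` {v} \<inter> space M" by auto
  thus ?thesis using measurable_sets[OF urn_meas[of k i], of "{v}"] by simp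
qed

lemma urn_eq_meas: "{\<omega>\<in>space M. urn_balls B0 E X k \<omega> i = urn_balls B0 E X n0 \<omega> i} \<in> sets M"
proof -
  have "{\<omega>\<in>space M. urn_balls B0 E X k \<omega> i = urn_balls B0 E X n0 \<omega> i}
     = (\<Union>v. {\<omega>\<in>space M. urn_balls B0 E X k \<omega> i = v} \<inter> {\<omega>\<in>space M. urn_balls B0 E X n0 \<omega> i = v})" by auto
  thus ?thesis using urn_val_meas by simp
qed

lemma A_meas: "{\<omega>\<in>space M. \<forall>k\<ge>n0. urn_balls B0 E X k \<omega> i = urn_balls B0 E X n0 \<omega> i} \<in> sets M"
proof -
  have "{\<omega>\<in>space M. \<forall>k\<ge>n0. urn_balls B0 E X k \<omega> i = urn_balls B0 E X n0 \<omega> i}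
    = (\<Inter>k. {\<omega>\<in>space M. n0 \<le> k \<longrightarrow> urn_balls B0 E X k \<omega> i = urn_balls B0 E X n0 \<omega> i})" by auto
  moreover have "{\<omega>\<in>space M. n0 \<le> k \<longrightarrow> urn_balls B0 E X k \<omega> i = urn_balls B0 E X n0 \<omega> i} \<in> sets M" for k
    using urn_eq_meas[of k i n0] by (cases "n0 \<le> k") auto
  ultimately show ?thesis by (metis (no_types, lifting) sets.countable_INT UNIV_not_empty image_subset_iff)
qed

lemma A_null:
  assumes im: "i \<in> {1..m}"
  shows "measure M {\<omega>\<in>space M. \<forall>k\<ge>n0. urn_balls B0 E X k \<omega> i = urn_balls B0 E X n0 \<omega> i} = 0"
    (is "measure M ?A = 0")
proof -
  interpret prob_space M by (rule ps)
  obtain I where I: "I \<in> E" "i \<in> I" using hg im unfolding hypergraph_def by blast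
  define C where "C = DD (Suc n0)"
  have C1: "C \<ge> 1" unfolding C_def by (rule DD_pos)
  have bound: "measure M ?A \<le> exp (- (harm L / C))" for L
  proof -
    have sub: "?A \<subseteq> {\<omega>\<in>space M. \<forall>k\<in>{n0<..n0+L}. X k I \<omega> \<noteq> i}"
    proof
      fix \<omega> assume w0: "\<omega> \<in> ?A"
      have w1: "\<omega> \<in> space M" using w0 by blast
      have w2: "\<forall>k\<ge>n0. urn_balls B0 E X k \<omega> i = urn_balls B0 E X n0 \<omega> i" using w0 by blast
      have "X k I \<omega> \<noteq> i" if k: "k \<in> {n0<..n0+L}" for k
      proof
        assume X: "X k I \<omega> = i"
      obtain k' where k': "k = Suc k'" using k by (cases k) auto
      have "I \<in> {I'\<in>E. X k I' \<omega> = i}" using I X by simp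
      hence "card {I'\<in>E. X k I' \<omega> = i} \<ge> 1" using finE
        by (metis (no_types, lifting) One_nat_def Suc_leI card_gt_0_iff empty_iff finite_subset mem_Collect_eq subsetI)
      hence "urn_balls B0 E X k \<omega> i \<ge> urn_balls B0 E X k' \<omega> i + 1" unfolding k' by simp
      moreover have "urn_balls B0 E X k' \<omega> i \<ge> urn_balls B0 E X n0 \<omega> i" using k k' by (intro urn_mono) auto
      moreover have "urn_balls B0 E X k \<omega> i = urn_balls B0 E X n0 \<omega> i" using w2[rule_format, of k] k by simp
      ultimately show False by linarith
      qed
      thus "\<omega> \<in> {\<omega>\<in>space M. \<forall>k\<in>{n0<..n0+L}. X k I \<omega> \<noteq> i}" using w1 by blast
    qed
    have "measure M ?A \<le> measure M {\<omega>\<in>space M. \<forall>k\<in>{n0<..n0+L}. X k I \<omega> \<noteq> i}"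
      using sub by (intro finite_measure_mono) auto
    also have "\<dots> \<le> exp (- (\<Sum>k<L. 1 / DD (n0+k)))" by (rule F_bound[OF I])
    also have "\<dots> \<le> exp (- (harm L / C))"
    proof -
      have "harm L / C = (\<Sum>k<L. 1 / (real (Suc k) * C))" unfolding harm_sum
        by (simp add: sum_divide_distrib)
      also have "\<dots> \<le> (\<Sum>k<L. 1 / DD (n0+k))"
      proof (rule sum_mono)
        fix k
        have "DD (n0+k) \<le> real (Suc k) * C" using DD_le[of n0 k] unfolding C_def by (simp add: mult.commute)
        thus "1 / (real (Suc k) * C) \<le> 1 / DD (n0+k)" using DD_pos[of "n0+k"]
          by (intro divide_left_mono) auto
      qed
      finally show ?thesis by simp
    qed
    finally show ?thesis .
  qed
  have lim: "(\<lambda>L. exp (- (harm L / C))) \<longlonglongrightarrow> 0"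
  proof -
    have "filterlim (\<lambda>L. (1 / C) * harm L) at_top sequentially"
      using C1 by (intro filterlim_tendsto_pos_mult_at_top[OF tendsto_const _ harm_at_top]) auto
    hence "filterlim (\<lambda>L. harm L / C) at_top sequentially" by simp
    hence "filterlim (\<lambda>L. - (harm L / C)) at_bot sequentially"
      by (simp add: filterlim_uminus_at_top)
    thus ?thesis by (rule filterlim_compose[OF exp_at_bot])
  qed
  have "measure M ?A \<le> 0"
    by (rule LIMSEQ_le[OF tendsto_const lim]) (use bound in auto)
  thus ?thesis using measure_nonneg[of M ?A] by linarith
qed

end

theorem mainTheorem12:
  fixes M :: "'a measure" and m :: nat and E :: "nat set set" and B0 :: "nat \<Rightarrow> nat"
    and X :: "nat \<Rightarrow> nat set \<Rightarrow> 'a \<Rightarrow> nat" and i :: nat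
  assumes "polya_urn_process M m E B0 X"
    and "i \<in> {1..m}"
  shows "measure M {\<omega>\<in>space M. filterlim (\<lambda>n. urn_balls B0 E X n \<omega> i) at_top sequentially} = 1"
proof -
  note PU = assms(1)
  interpret prob_space M by (rule ps[OF PU])
  define u where "u n \<omega> = urn_balls B0 E X n \<omega> i" for n \<omega>
  define S where "S = {\<omega>\<in>space M. filterlim (\<lambda>n. u n \<omega>) at_top sequentially}"
  define A where "A n0 = {\<omega>\<in>space M. \<forall>k\<ge>n0. u k \<omega> = u n0 \<omega>}" for n0
  have Seq: "S = {\<omega>\<in>space M. \<forall>Z. \<exists>N. \<forall>n\<ge>N. Z \<le> u n \<omega>}"
    unfolding S_def filterlim_at_top eventually_sequentially by simp
  have Sm: "S \<in> sets M"
  proof -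
    have "S = (\<Inter>Z. \<Union>N. \<Inter>n\<in>{N..}. {\<omega>\<in>space M. Z \<le> u n \<omega>}) \<inter> space M"
      unfolding Seq by (auto simp: atLeast_def)
    moreover have "{\<omega>\<in>space M. Z \<le> u n \<omega>} \<in> sets M" for Z n
    proof -
      have "{\<omega>\<in>space M. Z \<le> u n \<omega>} = (\<lambda>\<omega>. u n \<omega>) -` {Z..} \<inter> space M" by auto
      thus ?thesis using measurable_sets[OF urn_meas[OF PU, of n i], of "{Z..}"] unfolding u_def by simp
    qed
    ultimately show ?thesis by auto
  qed
  have An: "A n0 \<in> null_sets M" for n0
  proof (rule null_setsI)
    show "A n0 \<in> sets M" unfolding A_def u_def by (rule A_meas[OF PU])
    have "measure M (A n0) = 0" unfolding A_def u_def by (rule A_null[OF PU assms(2)])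
    thus "emeasure M (A n0) = 0" using emeasure_eq_measure[of "A n0"] by simp
  qed
  have Un: "(\<Union>n0. A n0) \<in> null_sets M" using An by blast
  have sub: "space M - S \<subseteq> (\<Union>n0. A n0)"
  proof
    fix \<omega> assume w: "\<omega> \<in> space M - S"
    have mono: "u a \<omega> \<le> u b \<omega>" if "a \<le> b" for a b unfolding u_def using urn_mono[OF PU that] .
    show "\<omega> \<in> (\<Union>n0. A n0)"
    proof (rule ccontr)
      assume "\<omega> \<notin> (\<Union>n0. A n0)"
      hence nA: "\<forall>n0. \<exists>k\<ge>n0. u k \<omega> \<noteq> u n0 \<omega>" using w unfolding A_def by blast
      have ex: "\<exists>N. Z \<le> u N \<omega>" for Z
      proof (induction Z)
        case 0 thus ?case by simp
      next
        case (Suc Z)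
        then obtain N where N: "Z \<le> u N \<omega>" by blast
        obtain k where k: "k \<ge> N" "u k \<omega> \<noteq> u N \<omega>" using nA by blast
        have "u N \<omega> \<le> u k \<omega>" using mono k(1) .
        hence "Suc Z \<le> u k \<omega>" using k(2) N by linarith
        thus ?case by blast
      qed
      have "\<forall>Z. \<exists>N. \<forall>n\<ge>N. Z \<le> u n \<omega>"
      proof
        fix Z obtain N where "Z \<le> u N \<omega>" using ex by blast
        hence "\<forall>n\<ge>N. Z \<le> u n \<omega>" using mono le_trans by blast
        thus "\<exists>N. \<forall>n\<ge>N. Z \<le> u n \<omega>" by blast
      qed
      hence "\<omega> \<in> S" using w unfolding Seq by blast
      thus False using w by blast
    qed
  qed
  have "space M - S \<in> null_sets M" using Un Sm sub by (intro null_sets_subset[OF Un]) auto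
  hence "prob (space M - S) = 0" by (simp add: emeasure_eq_measure null_sets_def)
  hence "prob S = 1" using prob_compl[OF Sm] by simp
  thus ?thesis unfolding S_def u_def .
qed

end
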